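(* Let $q\ge 4$ and let $H_1$ be a hyperplane of $\mathrm{PG}(U_1)$ with $|H_1\cap\mathcal O_1|=q^2-q+1$. Then every twisted cubic of $\mathcal O_1$ meets $H_1$ in at most three points.
   Context: $q$ is a prime power. Let $U_1\subset\mathbb F_{q^3}^8$ be the set of vectors $(a,b^{q^2},b^{q},c,b,c^{q},c^{q^2},d)$ with $a,d\in\mathbb F_q$, $b,c\in\mathbb F_{q^3}$; it is an $8$-dimensional $\mathbb F_q$-vector space, so $\mathrm{PG}(U_1)\cong\mathrm{PG}(7,q)$. For $(a,b,c,d)\ne 0$ let $P(a,b,c,d)$ be the point of $\mathrm{PG}(U_1)$ spanned by this vector. Let $\mathcal O_1=\{P(1,t,t^{q^2+q},t^{q^2+q+1}) : t\in\mathbb F_{q^3}\}\cup\{P(0,0,0,1)\}$. Let $\theta:\mathrm{PG}(1,q^3)\to\mathcal O_1$ be the bijection $\langle(1,t)\rangle\mapsto P(1,t,t^{q^2+q},t^{q^2+q+1})$, $\langle(0,1)\rangle\mapsto P(0,0,0,1)$. A $q$-order subline of $\mathrm{PG}(1,q^3)$ is the image of $\mathrm{PG}(1,q)=\{\langle(1,t)\rangle:t\in\mathbb F_q\}\cup\{\langle(0,1)\rangle\}$ under an element of $\mathrm{PGL}(2,q^3)$; the sets $\theta(L)$ are twisted cubics (each spanning a solid), called the twisted cubics of $\mathcal O_1$. *)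

theory Defs
  imports "HOL-Computational_Algebra.Primes" "HOL-Library.Cardinality"
begin

text \<open>The ambient field F_{q^3} is a finite field type 'a with CARD('a) = q^3;
  F_q is its subfield of elements fixed by x \<mapsto> x^q.  Vectors of F_{q^3}^8 are
  lists of length 8.\<close>

definition Fq :: "nat \<Rightarrow> 'a::field set" where
  "Fq q = {x. x ^ q = x}"

definition vecU :: "nat \<Rightarrow> 'a::field \<Rightarrow> 'a \<Rightarrow> 'a \<Rightarrow> 'a \<Rightarrow> 'a list" where
  "vecU q a b c d = [a, b ^ (q^2), b ^ q, c, b, c ^ q, c ^ (q^2), d]"

definition U1 :: "nat \<Rightarrow> 'a::field list set" where
  "U1 q = {vecU q a b c d | a b c d. a \<in> Fq q \<and> d \<in> Fq q}"

definition zero8 :: "'a::field list" where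
  "zero8 = replicate 8 0"

definition pt :: "nat \<Rightarrow> 'a::field list \<Rightarrow> 'a list set" where
  "pt q v = {map (\<lambda>x. l * x) v | l. l \<in> Fq q}"

definition PG_U1 :: "nat \<Rightarrow> 'a::field list set set" where
  "PG_U1 q = {pt q u | u. u \<in> U1 q \<and> u \<noteq> zero8}"

definition P :: "nat \<Rightarrow> 'a::field \<Rightarrow> 'a \<Rightarrow> 'a \<Rightarrow> 'a \<Rightarrow> 'a list set" where
  "P q a b c d = pt q (vecU q a b c d)"

definition O1 :: "nat \<Rightarrow> 'a::field list set set" where
  "O1 q = {P q 1 t (t ^ (q^2 + q)) (t ^ (q^2 + q + 1)) | t. True} \<union> {P q 0 0 0 1}"

definition hyperplane :: "nat \<Rightarrow> 'a::field list set set \<Rightarrow> bool" where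
  "hyperplane q H \<longleftrightarrow> (\<exists>f :: 'a list \<Rightarrow> 'a.
      (\<forall>u\<in>U1 q. \<forall>v\<in>U1 q. f (map2 (+) u v) = f u + f v) \<and>
      (\<forall>l\<in>Fq q. \<forall>u\<in>U1 q. f (map (\<lambda>x. l * x) u) = l * f u) \<and>
      (\<forall>u\<in>U1 q. f u \<in> Fq q) \<and>
      (\<exists>u\<in>U1 q. f u \<noteq> 0) \<and>
      H = {pt q u | u. u \<in> U1 q \<and> u \<noteq> zero8 \<and> f u = 0})"

text \<open>theta on PG(1,q^3), with points given by nonzero representative pairs (x,y) = <(x,y)>.\<close>
definition theta :: "nat \<Rightarrow> 'a::field \<times> 'a \<Rightarrow> 'a list set" where
  "theta q p = (if fst p = 0 then P q 0 0 0 1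
               else (let t = snd p / fst p in P q 1 t (t ^ (q^2 + q)) (t ^ (q^2 + q + 1))))"

definition matapp :: "'a::field \<times> 'a \<times> 'a \<times> 'a \<Rightarrow> 'a \<times> 'a \<Rightarrow> 'a \<times> 'a" where
  "matapp M p = (case M of (a, b, c, d) \<Rightarrow> (a * fst p + b * snd p, c * fst p + d * snd p))"

text \<open>q-order subline: image of PG(1,q) under an element of PGL(2,q^3) (invertible matrix).\<close>
definition subline :: "nat \<Rightarrow> 'a::field \<times> 'a \<times> 'a \<times> 'a \<Rightarrow> ('a \<times> 'a) set" where
  "subline q M = matapp M ` ({(1, t) | t. t \<in> Fq q} \<union> {(0, 1)})"

definition twisted_cubic :: "nat \<Rightarrow> 'a::field list set set \<Rightarrow> bool" where
  "twisted_cubic q C \<longleftrightarrow> (\<exists>a b c d :: 'a. a * d - b * c \<noteq> 0 \<and> C = theta q ` subline q (a, b, c, d))"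

end

theory Submission imports Defs "HOL-Number_Theory.Residues" "HOL-Computational_Algebra.Polynomial" begin

lemma card_pow_same:
  fixes x :: "'a :: {finite,field}"
  shows "x ^ CARD('a) = x"
proof (cases "x = 0")
  case False
  have "x * (\<Prod>y\<in>UNIV-{0}. x * y) = x * x ^ (card (UNIV :: 'a set) - 1) * \<Prod>(UNIV-{0})"
    by (simp add: prod.distrib mult_ac)
  also have "x * x ^ (card (UNIV :: 'a set) - 1) = x ^ Suc (card (UNIV :: 'a set) - 1)"
    by (subst power_Suc) auto
  also have "Suc (card (UNIV :: 'a set) - 1) = card (UNIV :: 'a set)"
    using finite_UNIV_card_ge_0[where ?'a = 'a] by simp
  also have "(\<Prod>y\<in>UNIV-{0}. x * y) = (\<Prod>y\<in>UNIV-{0}. y)"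
    by (rule prod.reindex_bij_witness[of _ "\<lambda>y. y / x" "\<lambda>y. x * y"]) (use False in auto)
  finally show ?thesis
    by simp
qed (use finite_UNIV_card_ge_0[where ?'a = 'a] in auto)

lemma nat_id1: "(q::nat) \<ge> 1 \<Longrightarrow> q^3 - 1 = (q - 1) * (q^2 + q + 1)"
  by (cases q) (simp_all add: power2_eq_square power3_eq_cube algebra_simps)
lemma nat_id2: "(q::nat) \<ge> 1 \<Longrightarrow> (q - 1) * (q^2 + q + 1 - 1) = q^3 - q"
  by (cases q) (simp_all add: power2_eq_square power3_eq_cube algebra_simps)
lemma nat_id3: "(q::nat) \<ge> 1 \<Longrightarrow> q^3 - q^2 = (q^2 - q) * q"
  by (cases q) (simp_all add: power2_eq_square power3_eq_cube algebra_simps)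

lemma frob_setup:
  fixes q :: nat
  assumes "\<exists>p k. prime p \<and> k > 0 \<and> q = p ^ k" and "CARD('a::{finite,field}) = q ^ 3"
  shows "q \<ge> 2" "\<And>x y :: 'a. (x + y) ^ q = x ^ q + y ^ q" "\<And>x :: 'a. x ^ (q^3) = x"
proof -
  obtain p k where pk: "prime p" "k > 0" "q = p ^ k" using assms(1) by blast
  have "CHAR('a) > 0" by (rule finite_imp_CHAR_pos) simp
  then have pc: "prime CHAR('a)" by (rule prime_CHAR_semidom)
  have "CHAR('a) dvd p ^ (k * 3)" using CHAR_dvd_CARD[where 'a='a] assms(2) pk
    by (simp add: power_mult)
  then have "CHAR('a) dvd p" using pc prime_dvd_power by blast
  then have cp: "CHAR('a) = p" using pc pk(1) by (simp add: primes_dvd_imp_eq)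
  show "q \<ge> 2" using pk prime_ge_2_nat
    by (metis One_nat_def Suc_1 Suc_leI less_trans_Suc linorder_not_less one_less_power prime_gt_1_nat)
  show "\<And>x y :: 'a. (x + y) ^ q = x ^ q + y ^ q"
    by (rule freshmans_dream'[OF pc]) (simp add: cp pk)
  show "\<And>x :: 'a. x ^ (q^3) = x" using card_pow_same assms(2) by metis
qed

definition Tr :: "nat \<Rightarrow> 'a::field \<Rightarrow> 'a" where "Tr q x = x + x^q + x^(q^2)"
definition Nm :: "nat \<Rightarrow> 'a::field \<Rightarrow> 'a" where "Nm q x = x * x^q * x^(q^2)"
definition wc :: "nat \<Rightarrow> 'a::field \<Rightarrow> 'a \<Rightarrow> 'a \<times> 'a \<times> 'a \<times> 'a" where
  "wc q x y = (Nm q x, y * x^q * x^(q^2), x * y^q * y^(q^2), Nm q y)"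
definition tadd :: "'a::field \<times> 'a \<times> 'a \<times> 'a \<Rightarrow> 'a \<times> 'a \<times> 'a \<times> 'a \<Rightarrow> 'a \<times> 'a \<times> 'a \<times> 'a" where
  "tadd u v = (case u of (a,b,c,d) \<Rightarrow> case v of (a',b',c',d') \<Rightarrow> (a+a',b+b',c+c',d+d'))"
definition tsc :: "'a::field \<Rightarrow> 'a \<times> 'a \<times> 'a \<times> 'a \<Rightarrow> 'a \<times> 'a \<times> 'a \<times> 'a" where
  "tsc l u = (case u of (a,b,c,d) \<Rightarrow> (l*a,l*b,l*c,l*d))"
definition Bt :: "nat \<Rightarrow> 'a::field \<Rightarrow> 'a \<Rightarrow> 'a \<Rightarrow> 'a \<Rightarrow> 'a \<Rightarrow> 'a \<times> 'a \<times> 'a \<times> 'a" where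
  "Bt q \<alpha> \<beta> \<gamma> \<delta> t = (Tr q (\<beta> * \<alpha>^q * \<alpha>^(q^2) * t),
     \<delta> * \<alpha>^q * \<alpha>^(q^2) * t + \<gamma> * \<beta>^q * \<alpha>^(q^2) * t^q + \<gamma> * \<alpha>^q * \<beta>^(q^2) * t^(q^2),
     \<beta> * \<gamma>^q * \<gamma>^(q^2) * t + \<alpha> * \<delta>^q * \<gamma>^(q^2) * t^q + \<alpha> * \<gamma>^q * \<delta>^(q^2) * t^(q^2),
     Tr q (\<delta> * \<gamma>^q * \<gamma>^(q^2) * t))"
definition Ct :: "nat \<Rightarrow> 'a::field \<Rightarrow> 'a \<Rightarrow> 'a \<Rightarrow> 'a \<Rightarrow> 'a \<Rightarrow> 'a \<times> 'a \<times> 'a \<times> 'a" where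
  "Ct q \<alpha> \<beta> \<gamma> \<delta> s = (Tr q (\<alpha> * \<beta>^q * \<beta>^(q^2) * s),
     \<gamma> * \<beta>^q * \<beta>^(q^2) * s + \<delta> * \<alpha>^q * \<beta>^(q^2) * s^q + \<delta> * \<beta>^q * \<alpha>^(q^2) * s^(q^2),
     \<alpha> * \<delta>^q * \<delta>^(q^2) * s + \<beta> * \<gamma>^q * \<delta>^(q^2) * s^q + \<beta> * \<delta>^q * \<gamma>^(q^2) * s^(q^2),
     Tr q (\<gamma> * \<delta>^q * \<delta>^(q^2) * s))"

context
  fixes q :: nat
  assumes q2: "q \<ge> 2"
    and fadd: "\<And>x y :: 'a::{finite,field}. (x + y) ^ q = x ^ q + y ^ q"
    and f3: "\<And>x :: 'a. x ^ (q^3) = x"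
begin

lemma fsq: "(x::'a) ^ (q^2) = (x ^ q) ^ q"
  by (simp add: power2_eq_square power_mult)

lemma f3': "(((x::'a) ^ q) ^ q) ^ q = x"
  using f3[of x] by (simp add: power3_eq_cube power_mult mult.assoc)

lemma fminus: "(- (x::'a)) ^ q = - (x ^ q)"
proof -
  have "x ^ q + (-x) ^ q = 0" using fadd[of x "-x"] q2 by (simp add: power_0_left)
  then show ?thesis by (metis add.commute minus_unique)
qed

lemma fdiff: "((x::'a) - y) ^ q = x ^ q - y ^ q"
  using fadd[of x "-y"] fminus[of y] by simp

lemma q0: "q > 0" using q2 by simp
lemma f0: "(0::'a) ^ q = 0" using q2 by (simp add: power_0_left)

lemmas frs = fadd power_mult_distrib fsq f3' fminus fdiff f0

lemma key_identity:
  fixes \<alpha> \<beta> \<gamma> \<delta> t :: 'a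
  shows "wc q (\<alpha> + \<beta> * t) (\<gamma> + \<delta> * t) =
    tadd (wc q \<alpha> \<gamma>) (tadd (Bt q \<alpha> \<beta> \<gamma> \<delta> t) (tadd (Ct q \<alpha> \<beta> \<gamma> \<delta> (t^q * t^(q^2))) (tsc (Nm q t) (wc q \<beta> \<delta>))))"
  unfolding wc_def tadd_def tsc_def Bt_def Ct_def Tr_def Nm_def
  by (simp add: frs; simp add: algebra_simps)


lemma Fq_iff: "(x::'a) \<in> Fq q \<longleftrightarrow> x ^ q = x" by (simp add: Fq_def)
lemma Fq_0: "(0::'a) \<in> Fq q" using f0 by (simp add: Fq_iff)
lemma Fq_1: "(1::'a) \<in> Fq q" by (simp add: Fq_iff)
lemma Fq_add: "(x::'a) \<in> Fq q \<Longrightarrow> y \<in> Fq q \<Longrightarrow> x + y \<in> Fq q" by (simp add: Fq_iff fadd)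
lemma Fq_mult: "(x::'a) \<in> Fq q \<Longrightarrow> y \<in> Fq q \<Longrightarrow> x * y \<in> Fq q" by (simp add: Fq_iff power_mult_distrib)
lemma Fq_minus: "(x::'a) \<in> Fq q \<Longrightarrow> - x \<in> Fq q" by (simp add: Fq_iff fminus)
lemma Fq_diff: "(x::'a) \<in> Fq q \<Longrightarrow> y \<in> Fq q \<Longrightarrow> x - y \<in> Fq q" by (simp add: Fq_iff fdiff)
lemma Fq_inv: "(x::'a) \<in> Fq q \<Longrightarrow> inverse x \<in> Fq q" by (simp add: Fq_iff power_inverse)
lemma Fq_div: "(x::'a) \<in> Fq q \<Longrightarrow> y \<in> Fq q \<Longrightarrow> x / y \<in> Fq q" by (simp add: Fq_iff power_divide)
lemma Fq_sq: "(x::'a) \<in> Fq q \<Longrightarrow> x ^ (q^2) = x" by (simp add: Fq_iff fsq)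
lemma Tr_Fq: "Tr q (x::'a) \<in> Fq q" unfolding Fq_iff Tr_def by (simp add: frs algebra_simps)
lemma Nm_Fq: "Nm q (x::'a) \<in> Fq q" unfolding Fq_iff Nm_def by (simp add: frs algebra_simps)
lemma fq_nz: "(x::'a) \<noteq> 0 \<Longrightarrow> x ^ q \<noteq> 0" by simp
lemma Nm_nz: "(x::'a) \<noteq> 0 \<Longrightarrow> Nm q x \<noteq> 0" by (simp add: Nm_def)

definition V :: "'a \<times> 'a \<times> 'a \<times> 'a \<Rightarrow> 'a list" where
  "V u = (case u of (a,b,c,d) \<Rightarrow> vecU q a b c d)"
definition inT :: "'a \<times> 'a \<times> 'a \<times> 'a \<Rightarrow> bool" where
  "inT u = (case u of (a,b,c,d) \<Rightarrow> a \<in> Fq q \<and> d \<in> Fq q)"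

lemma V_add: "V (tadd u v) = map2 (+) (V u) (V v)"
  by (cases u; cases v) (simp add: V_def tadd_def vecU_def frs)
lemma V_sc: "l \<in> Fq q \<Longrightarrow> V (tsc l u) = map (\<lambda>x. l * x) (V u)"
  by (cases u) (simp add: V_def tsc_def vecU_def frs Fq_iff)
lemma V_U1: "inT u \<Longrightarrow> V u \<in> U1 q"
  by (cases u) (auto simp: V_def inT_def U1_def)
lemma V_zero: "V u = zero8 \<longleftrightarrow> u = (0,0,0,0)"
  by (cases u) (auto simp: V_def zero8_def vecU_def numeral_eq_Suc f0 q0)
lemma inT_add: "inT u \<Longrightarrow> inT v \<Longrightarrow> inT (tadd u v)"
  by (cases u; cases v) (simp add: inT_def tadd_def Fq_add)
lemma inT_sc: "l \<in> Fq q \<Longrightarrow> inT u \<Longrightarrow> inT (tsc l u)"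
  by (cases u) (simp add: inT_def tsc_def Fq_mult)
lemma inT_wc: "inT (wc q x y)" by (simp add: inT_def wc_def Nm_Fq)
lemma inT_Bt: "inT (Bt q a b c d t)" by (simp add: inT_def Bt_def Tr_Fq)
lemma inT_Ct: "inT (Ct q a b c d t)" by (simp add: inT_def Ct_def Tr_Fq)

lemma pt_self: "(v::'a list) \<in> pt q v"
proof -
  have "map ((*) 1) v = v" by (induct v) auto
  then show ?thesis unfolding pt_def using Fq_1 by (metis (mono_tags, lifting) mem_Collect_eq)
qed

lemma pt_scale: "l \<in> Fq q \<Longrightarrow> l \<noteq> 0 \<Longrightarrow> pt q (map (\<lambda>x. l * x) v) = pt q (v::'a list)"
proof
  assume l: "l \<in> Fq q" "l \<noteq> 0"
  show "pt q (map (\<lambda>x. l * x) v) \<subseteq> pt q v"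
  proof
    fix w assume "w \<in> pt q (map (\<lambda>x. l * x) v)"
    then obtain m where m: "m \<in> Fq q" "w = map (\<lambda>x. m * x) (map (\<lambda>x. l * x) v)" unfolding pt_def by blast
    then have "w = map (\<lambda>x. (m * l) * x) v" by (simp add: mult.assoc)
    then show "w \<in> pt q v" unfolding pt_def using Fq_mult[OF m(1) l(1)] by blast
  qed
  show "pt q v \<subseteq> pt q (map (\<lambda>x. l * x) v)"
  proof
    fix w assume "w \<in> pt q v"
    then obtain m where m: "m \<in> Fq q" "w = map (\<lambda>x. m * x) v" unfolding pt_def by blast
    then have "w = map (\<lambda>x. (m / l) * x) (map (\<lambda>x. l * x) v)" using l by simp
    then show "w \<in> pt q (map (\<lambda>x. l * x) v)" unfolding pt_def using Fq_div[OF m(1) l(1)] by blast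
  qed
qed

lemma wc_scale0: "wc q 0 y = tsc (Nm q y) (0,0,0,1)"
  by (simp add: wc_def tsc_def Nm_def f0 q0)

lemma wc_scale1: "x \<noteq> 0 \<Longrightarrow> wc q x y = tsc (Nm q x) (1, y/x, (y/x)^(q^2+q), (y/x)^(q^2+q+1))"
  by (simp add: wc_def tsc_def Nm_def power_add power_divide field_simps)

lemma theta_rep: "(x, y) \<noteq> (0, 0) \<Longrightarrow> theta q (x, y) = pt q (V (wc q (x::'a) y))"
proof (cases "x = 0")
  case True
  assume "(x, y) \<noteq> (0, 0)"
  then have y: "y \<noteq> 0" using True by simp
  have "pt q (V (wc q x y)) = pt q (V (0,0,0,1))"
    using True V_sc[OF Nm_Fq, of y] pt_scale[OF Nm_Fq Nm_nz[OF y]] by (simp add: wc_scale0)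
  then show ?thesis using True by (simp add: theta_def P_def V_def)
next
  case False
  have "pt q (V (wc q x y)) = pt q (V (1, y/x, (y/x)^(q^2+q), (y/x)^(q^2+q+1)))"
    using False V_sc[OF Nm_Fq, of x] pt_scale[OF Nm_Fq Nm_nz[OF False]] by (simp add: wc_scale1)
  then show ?thesis using False by (simp add: theta_def P_def V_def Let_def)
qed


lemma P_neq: "pt q (vecU q 0 0 0 1) \<noteq> pt q (vecU q (1::'a) t c d)"
proof
  assume "pt q (vecU q 0 0 0 1) = pt q (vecU q (1::'a) t c d)"
  then have "vecU q 0 0 0 1 \<in> pt q (vecU q (1::'a) t c d)" using pt_self by metis
  then obtain l where "vecU q 0 0 0 1 = map (\<lambda>x. l * x) (vecU q (1::'a) t c d)" unfolding pt_def by blast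
  then show False by (auto simp: vecU_def f0 q0)
qed

lemma P_eq: "pt q (vecU q 1 t c d) = pt q (vecU q (1::'a) t' c' d') \<Longrightarrow> t = t'"
proof -
  assume "pt q (vecU q 1 t c d) = pt q (vecU q (1::'a) t' c' d')"
  then have "vecU q 1 t c d \<in> pt q (vecU q (1::'a) t' c' d')" using pt_self by metis
  then obtain l where "vecU q 1 t c d = map (\<lambda>x. l * x) (vecU q (1::'a) t' c' d')" unfolding pt_def by blast
  then show "t = t'" by (simp add: vecU_def)
qed

lemma theta_cross:
  assumes "(x, y) \<noteq> (0, 0)" "(x', y') \<noteq> (0, 0)" "theta q (x, y) = theta q (x', y')"
  shows "x * y' = x' * (y::'a)"
proof (cases "x = 0")
  case True
  show ?thesis
  proof (cases "x' = 0")
    case False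
    then show ?thesis using assms(3) True P_neq by (simp add: theta_def P_def Let_def)
  qed (simp add: True)
next
  case False
  show ?thesis
  proof (cases "x' = 0")
    case True
    then show ?thesis using assms(3) False P_neq by (simp add: theta_def P_def Let_def) (metis P_neq)
  next
    case False': False
    then have "y / x = y' / x'" using assms(3) False P_eq by (simp add: theta_def P_def Let_def)
    then show ?thesis using False False' by (simp add: field_simps)
  qed
qed

lemma theta_scale: "c \<noteq> 0 \<Longrightarrow> theta q (c * x, c * y) = theta q (x, (y::'a))"
  by (simp add: theta_def)

lemma theta_O1: "theta q p \<in> O1 q"
proof (cases "fst p = 0")
  case True
  then show ?thesis by (simp add: theta_def O1_def)
next
  case False
  define t where "t = snd p / fst p"
  have "theta q p = P q 1 t (t^(q^2+q)) (t^(q^2+q+1))" using False by (simp add: theta_def t_def Let_def)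
  then show ?thesis unfolding O1_def by blast
qed

lemma card_Fq:
  assumes cardF: "CARD('a) = q ^ 3"
  shows "card (Fq q :: 'a set) = q"
proof (rule antisym)
  define p1 :: "'a poly" where "p1 = monom 1 q - [:0, 1:]"
  have p1nz: "p1 \<noteq> 0"
  proof
    assume "p1 = 0"
    then have "coeff p1 q = 0" by simp
    then show False using q2 by (simp add: p1_def coeff_pCons split: nat.splits)
  qed
  have "Fq q = {x::'a. poly p1 x = 0}" by (auto simp: Fq_iff p1_def poly_monom)
  then have "card (Fq q :: 'a set) \<le> degree p1" using card_poly_roots_bound[OF p1nz] by simp
  also have "degree p1 \<le> q" unfolding p1_def
    by (rule degree_diff_le) (use q2 in \<open>auto simp: degree_monom_le degree_pCons_eq_if\<close>)
  finally show "card (Fq q :: 'a set) \<le> q" .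
next
  define n where "n = q^2 + q + 1"
  define G :: "'a poly" where "G = (\<Sum>i<n. monom 1 ((q - 1) * i))"
  have "coeff G 0 = (\<Sum>i<n. if (q - 1) * i = 0 then 1 else 0)" by (simp add: G_def coeff_sum)
  also have "\<dots> = (\<Sum>i<n. if i = 0 then 1 else 0)"
    by (rule sum.cong) (use q2 in auto)
  also have "\<dots> = 1" by (simp add: n_def)
  finally have "coeff G 0 = 1" by simp
  then have Gnz: "G \<noteq> 0" by auto
  have "degree G \<le> (q - 1) * (n - 1)" unfolding G_def
    by (rule degree_sum_le) (auto intro: order.trans[OF degree_monom_le] simp: n_def)
  also have "(q - 1) * (n - 1) = q^3 - q" unfolding n_def using nat_id2 q2 by simp
  finally have cG: "card {x::'a. poly G x = 0} \<le> q^3 - q"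
    using card_poly_roots_bound[OF Gnz] by simp
  have sub: "UNIV - {0} \<subseteq> (Fq q - {0}) \<union> {x::'a. poly G x = 0}"
  proof
    fix x :: 'a assume x: "x \<in> UNIV - {0}"
    define y where "y = x ^ (q - 1)"
    have "x * x ^ (q^3 - 1) = x ^ (q^3)" using q2
      by (metis One_nat_def Suc_pred power_Suc q0 zero_less_power)
    then have "x ^ (q^3 - 1) = 1" using f3[of x] x by simp
    moreover have "q^3 - 1 = (q - 1) * n" unfolding n_def using nat_id1 q2 by simp
    ultimately have "y ^ n = 1" by (simp add: y_def power_mult)
    then have "(y - 1) * (\<Sum>i<n. y ^ i) = 0" using power_diff_1_eq[of y n] by simp
    moreover have "poly G x = (\<Sum>i<n. y ^ i)" by (simp add: G_def poly_sum poly_monom y_def power_mult)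
    ultimately have "y = 1 \<or> poly G x = 0" by simp
    moreover have "y = 1 \<Longrightarrow> x ^ q = x" using q2 unfolding y_def
      by (metis One_nat_def Suc_pred mult.right_neutral power_Suc q0)
    ultimately show "x \<in> (Fq q - {0}) \<union> {x::'a. poly G x = 0}" using x by (auto simp: Fq_iff)
  qed
  have "q^3 - 1 = card (UNIV - {0::'a})" using cardF by (simp add: card_Diff_singleton)
  also have "\<dots> \<le> card ((Fq q - {0}) \<union> {x::'a. poly G x = 0})" by (rule card_mono[OF _ sub]) simp
  also have "\<dots> \<le> card (Fq q - {0::'a}) + card {x::'a. poly G x = 0}" by (rule card_Un_le)
  also have "\<dots> \<le> (card (Fq q :: 'a set) - 1) + (q^3 - q)" using cG Fq_0 by (simp add: card_Diff_singleton)
  finally have "q^3 - 1 \<le> (card (Fq q :: 'a set) - 1) + (q^3 - q)" .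
  moreover have "q \<le> q^3" using q2 by (simp add: power3_eq_cube)
  ultimately show "q \<le> card (Fq q :: 'a set)" using q2 by linarith
qed

definition lin :: "('a \<Rightarrow> 'a) \<Rightarrow> bool" where
  "lin \<phi> \<longleftrightarrow> (\<forall>x y. \<phi> (x + y) = \<phi> x + \<phi> y) \<and> (\<forall>l\<in>Fq q. \<forall>x. \<phi> (l * x) = l * \<phi> x) \<and> (\<forall>x. \<phi> x \<in> Fq q)"

lemma lin_diff: "lin \<phi> \<Longrightarrow> \<phi> (x - y) = \<phi> x - \<phi> y"
  unfolding lin_def by (metis add_diff_cancel diff_add_cancel)
lemma lin_0: "lin \<phi> \<Longrightarrow> \<phi> 0 = 0"
  using lin_diff[of \<phi> 0 0] by simp

lemma kernel_card:
  assumes cardF: "CARD('a) = q ^ 3" and L: "lin \<phi>" and t0: "\<phi> t0 = 1"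
  shows "card {t. \<phi> t = 0} = q^2"
proof -
  have e1: "\<And>x y. \<phi> (x + y) = \<phi> x + \<phi> y" and e2: "\<And>l x. l \<in> Fq q \<Longrightarrow> \<phi> (l * x) = l * \<phi> x"
    and e3: "\<And>x. \<phi> x \<in> Fq q" using L unfolding lin_def by auto
  have bij: "bij_betw (\<lambda>(k, l). k + l * t0) ({t. \<phi> t = 0} \<times> Fq q) UNIV"
  proof (rule bij_betw_byWitness[where f'="\<lambda>t. (t - \<phi> t * t0, \<phi> t)"])
    show "\<forall>a\<in>{t. \<phi> t = 0} \<times> Fq q. (\<lambda>t. (t - \<phi> t * t0, \<phi> t)) ((\<lambda>(k, l). k + l * t0) a) = a"
    proof
      fix a assume a: "a \<in> {t. \<phi> t = 0} \<times> (Fq q :: 'a set)"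
      obtain k l :: 'a where kl: "a = (k, l)" "\<phi> k = 0" "l \<in> Fq q" using a by auto
      have "\<phi> (k + l * t0) = l" using e1[of k "l * t0"] e2[OF kl(3), of t0] kl(2) t0 by simp
      then show "(\<lambda>t. (t - \<phi> t * t0, \<phi> t)) ((\<lambda>(k, l). k + l * t0) a) = a" using kl(1) by simp
    qed
    show "\<forall>a'\<in>UNIV. (\<lambda>(k, l). k + l * t0) ((\<lambda>t. (t - \<phi> t * t0, \<phi> t)) a') = a'" by simp
    show "(\<lambda>t. (t - \<phi> t * t0, \<phi> t)) ` UNIV \<subseteq> {t. \<phi> t = 0} \<times> Fq q"
    proof
      fix x assume "x \<in> (\<lambda>t. (t - \<phi> t * t0, \<phi> t)) ` UNIV"
      then obtain t where x: "x = (t - \<phi> t * t0, \<phi> t)" by auto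
      have "\<phi> (\<phi> t * t0) = \<phi> t" using e2[OF e3[of t], of t0] t0 by simp
      then have "\<phi> (t - \<phi> t * t0) = 0" using lin_diff[OF L, of t "\<phi> t * t0"] by simp
      then show "x \<in> {t. \<phi> t = 0} \<times> Fq q" using x e3[of t] by simp
    qed
  qed simp
  have "card ({t. \<phi> t = 0} \<times> (Fq q :: 'a set)) = card (UNIV :: 'a set)" by (rule bij_betw_same_card[OF bij])
  then have "card {t. \<phi> t = 0} * card (Fq q :: 'a set) = q^3" using cardF by (simp only: card_cartesian_product)
  then have "card {t. \<phi> t = 0} * q = q^2 * q" using card_Fq[OF cardF]
    by (simp add: power3_eq_cube power2_eq_square)
  then show ?thesis using q0 by simp
qed

lemma lin_eqs:
  assumes "lin \<phi>"
  shows "\<And>x y. \<phi> (x + y) = \<phi> x + \<phi> y" "\<And>l x. l \<in> Fq q \<Longrightarrow> \<phi> (l * x) = l * \<phi> x" "\<And>x. \<phi> x \<in> Fq q"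
  using assms unfolding lin_def by auto

lemma nonzero_norm:
  assumes L: "lin \<phi>" and t0: "\<phi> t0 \<noteq> 0"
  obtains t1 where "\<phi> t1 = 1"
proof -
  have "\<phi> (inverse (\<phi> t0) * t0) = inverse (\<phi> t0) * \<phi> t0"
    using lin_eqs(2)[OF L Fq_inv[OF lin_eqs(3)[OF L]]] by simp
  then show ?thesis using that t0 by simp
qed

lemma count_S:
  assumes cardF: "CARD('a) = q ^ 3" and L1: "lin \<phi>1" and L2: "lin \<phi>2"
    and z1: "\<phi>1 1 = 0" and z2: "\<phi>2 1 = 0"
  shows "q^2 - q + 1 \<le> card {t. \<phi>1 t + \<phi>2 (t^q * t^(q^2)) = 0}"
proof -
  define F where "F t = \<phi>1 t + \<phi>2 (t^q * t^(q^2))" for t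
  define S where "S = {t. F t = 0}"
  note a1 = lin_eqs[OF L1] and a2 = lin_eqs[OF L2]
  have F0: "F 0 = 0" using lin_0[OF L1] lin_0[OF L2] by (simp add: F_def fsq f0)
  have FFq: "F t \<in> Fq q" for t unfolding F_def by (rule Fq_add[OF a1(3) a2(3)])
  have shift: "F (t + \<mu>) = F t - \<mu> * \<phi>2 t" "\<phi>2 (t + \<mu>) = \<phi>2 t" if mu: "\<mu> \<in> Fq q" for t \<mu>
  proof -
    have m1: "\<mu> ^ q = \<mu>" using mu Fq_iff by simp
    have "(t + \<mu>)^q * (t + \<mu>)^(q^2) = t^q * t^(q^2) + \<mu> * (Tr q t * 1 - t) + (\<mu> * \<mu>) * 1"
      by (simp add: fadd fsq m1 Tr_def algebra_simps)
    moreover have "\<phi>2 (t^q * t^(q^2) + \<mu> * (Tr q t * 1 - t) + (\<mu> * \<mu>) * 1)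
        = \<phi>2 (t^q * t^(q^2)) + \<phi>2 (\<mu> * (Tr q t * 1 - t)) + \<phi>2 ((\<mu> * \<mu>) * 1)"
      using a2(1) by simp
    moreover have "\<phi>2 (\<mu> * (Tr q t * 1 - t)) = \<mu> * (Tr q t * \<phi>2 1 - \<phi>2 t)"
      using a2(2)[OF mu] a2(2)[OF Tr_Fq, of t 1] lin_diff[OF L2] by simp
    moreover have "\<phi>2 ((\<mu> * \<mu>) * 1) = (\<mu> * \<mu>) * \<phi>2 1" using a2(2)[OF Fq_mult[OF mu mu]] by blast
    ultimately have "\<phi>2 ((t + \<mu>)^q * (t + \<mu>)^(q^2)) = \<phi>2 (t^q * t^(q^2)) - \<mu> * \<phi>2 t"
      using z2 by simp
    moreover have "\<phi>1 (t + \<mu>) = \<phi>1 t" using a1(1)[of t \<mu>] a1(2)[OF mu, of 1] z1 by simp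
    ultimately show "F (t + \<mu>) = F t - \<mu> * \<phi>2 t" by (simp add: F_def)
    show "\<phi>2 (t + \<mu>) = \<phi>2 t" using a2(1)[of t \<mu>] a2(2)[OF mu, of 1] z2 by simp
  qed
  show ?thesis
  proof (cases "\<forall>t. \<phi>2 t = 0")
    case True
    then have SS: "S = {t. \<phi>1 t = 0}" using lin_0[OF L2] by (simp add: S_def F_def)
    show ?thesis
    proof (cases "\<forall>t. \<phi>1 t = 0")
      case True
      then have "S = UNIV" using SS by auto
      then have "card S = q^3" using cardF by simp
      moreover have "q^2 - q + 1 \<le> q^3"
      proof -
        have "q \<le> q^2" by (metis power2_eq_square le_square)
        moreover have "q^2 \<le> q^3" by (rule power_increasing) (use q2 in auto)
        ultimately show ?thesis using q2 by linarith
      qed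
      ultimately show ?thesis unfolding S_def F_def by simp
    next
      case False
      then obtain t0 where "\<phi>1 t0 \<noteq> 0" by auto
      then obtain t1 where "\<phi>1 t1 = 1" using nonzero_norm[OF L1] by blast
      then have "card S = q^2" using kernel_card[OF cardF L1] SS by simp
      moreover have "q \<le> q^2" by (metis power2_eq_square le_square)
      ultimately show ?thesis unfolding S_def F_def using q2 by simp
    qed
  next
    case False
    then obtain t0 where "\<phi>2 t0 \<noteq> 0" by auto
    then obtain t1 where "\<phi>2 t1 = 1" using nonzero_norm[OF L2] by blast
    define K where "K = {t. \<phi>2 t = 0}"
    have cK: "card K = q^2" using kernel_card[OF cardF L2 \<open>\<phi>2 t1 = 1\<close>] by (simp add: K_def)
    have cK': "card (UNIV - K) = q^3 - q^2" using cK cardF by (simp add: card_Diff_subset)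
    have bij: "bij_betw (\<lambda>(s, \<mu>). s + \<mu>) ((S \<inter> (UNIV - K)) \<times> Fq q) (UNIV - K)"
    proof (rule bij_betw_byWitness[where f'="\<lambda>t. (t + F t / \<phi>2 t, - (F t / \<phi>2 t))"])
      show "\<forall>a\<in>(S \<inter> (UNIV - K)) \<times> Fq q. (\<lambda>t. (t + F t / \<phi>2 t, - (F t / \<phi>2 t))) ((\<lambda>(s, \<mu>). s + \<mu>) a) = a"
      proof
        fix a assume a: "a \<in> (S \<inter> (UNIV - K)) \<times> (Fq q :: 'a set)"
        obtain s \<mu> :: 'a where sm: "a = (s, \<mu>)" "F s = 0" "\<phi>2 s \<noteq> 0" "\<mu> \<in> Fq q"
          using a by (auto simp: S_def K_def)
        have "F (s + \<mu>) / \<phi>2 (s + \<mu>) = - \<mu>" using shift[OF sm(4), of s] sm(2,3) by simp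
        then show "(\<lambda>t. (t + F t / \<phi>2 t, - (F t / \<phi>2 t))) ((\<lambda>(s, \<mu>). s + \<mu>) a) = a" using sm(1) by simp
      qed
      show "\<forall>a'\<in>UNIV - K. (\<lambda>(s, \<mu>). s + \<mu>) ((\<lambda>t. (t + F t / \<phi>2 t, - (F t / \<phi>2 t))) a') = a'" by simp
      show "(\<lambda>(s, \<mu>). s + \<mu>) ` ((S \<inter> (UNIV - K)) \<times> Fq q) \<subseteq> UNIV - K"
      proof
        fix x assume "x \<in> (\<lambda>(s, \<mu>). s + \<mu>) ` ((S \<inter> (UNIV - K)) \<times> (Fq q :: 'a set))"
        then obtain s \<mu> where sm: "x = s + \<mu>" "\<phi>2 s \<noteq> 0" "\<mu> \<in> Fq q" by (auto simp: K_def)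
        then show "x \<in> UNIV - K" using shift(2)[OF sm(3), of s] by (simp add: K_def)
      qed
      show "(\<lambda>t. (t + F t / \<phi>2 t, - (F t / \<phi>2 t))) ` (UNIV - K) \<subseteq> (S \<inter> (UNIV - K)) \<times> Fq q"
      proof
        fix x assume "x \<in> (\<lambda>t. (t + F t / \<phi>2 t, - (F t / \<phi>2 t))) ` (UNIV - K)"
        then obtain t where x: "x = (t + F t / \<phi>2 t, - (F t / \<phi>2 t))" "\<phi>2 t \<noteq> 0" by (auto simp: K_def)
        have nu: "F t / \<phi>2 t \<in> Fq q" by (rule Fq_div[OF FFq a2(3)])
        have "F (t + F t / \<phi>2 t) = 0" using shift(1)[OF nu, of t] x(2) by simp
        moreover have "\<phi>2 (t + F t / \<phi>2 t) \<noteq> 0" using shift(2)[OF nu, of t] x(2) by simp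
        ultimately show "x \<in> (S \<inter> (UNIV - K)) \<times> Fq q" using x(1) Fq_minus[OF nu] by (simp add: S_def K_def)
      qed
    qed
    have "card ((S \<inter> (UNIV - K)) \<times> (Fq q :: 'a set)) = card (UNIV - K)" by (rule bij_betw_same_card[OF bij])
    then have "card (S \<inter> (UNIV - K)) * q = (q^2 - q) * q" using cK' card_Fq[OF cardF] nat_id3 q2
      by (simp only: card_cartesian_product)
    then have c1: "card (S \<inter> (UNIV - K)) = q^2 - q" using q0 by simp
    have "0 \<notin> S \<inter> (UNIV - K)" using lin_0[OF L2] by (simp add: K_def)
    then have "card (insert 0 (S \<inter> (UNIV - K))) = q^2 - q + 1" using c1 by simp
    moreover have "insert 0 (S \<inter> (UNIV - K)) \<subseteq> S" using F0 by (auto simp: S_def)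
    ultimately have "q^2 - q + 1 \<le> card S" by (metis card_mono finite)
    then show ?thesis unfolding S_def F_def by simp
  qed
qed

context
  fixes f :: "'a list \<Rightarrow> 'a"
  assumes hadd: "\<forall>u\<in>U1 q. \<forall>v\<in>U1 q. f (map2 (+) u v) = f u + f v"
    and hsc: "\<forall>l\<in>Fq q. \<forall>u\<in>U1 q. f (map (\<lambda>x. l * x) u) = l * f u"
    and hFq: "\<forall>u\<in>U1 q. f u \<in> Fq q"
begin

lemma G_add: "inT u \<Longrightarrow> inT v \<Longrightarrow> f (V (tadd u v)) = f (V u) + f (V v)"
  using hadd V_U1 V_add by simp
lemma G_sc: "l \<in> Fq q \<Longrightarrow> inT u \<Longrightarrow> f (V (tsc l u)) = l * f (V u)"
  using hsc V_U1 V_sc by simp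
lemma G_Fq: "inT u \<Longrightarrow> f (V u) \<in> Fq q"
  using hFq V_U1 by simp

lemma H_mem:
  assumes H: "H = {pt q u | u. u \<in> U1 q \<and> u \<noteq> zero8 \<and> f u = 0}" and u: "inT u" "u \<noteq> (0,0,0,0)"
  shows "pt q (V u) \<in> H \<longleftrightarrow> f (V u) = 0"
proof
  assume "pt q (V u) \<in> H"
  then obtain u' where u': "u' \<in> U1 q" "u' \<noteq> zero8" "f u' = 0" "pt q (V u) = pt q u'" using H by blast
  then have "u' \<in> pt q (V u)" using pt_self by metis
  then obtain l where l: "l \<in> Fq q" "u' = map (\<lambda>x. l * x) (V u)" unfolding pt_def by blast
  then have u'': "u' = V (tsc l u)" using V_sc by simp
  have "l \<noteq> 0"
  proof
    assume "l = 0"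
    then have "tsc l u = (0,0,0,0)" by (cases u) (simp add: tsc_def)
    then show False using u'' u'(2) V_zero by simp
  qed
  moreover have "l * f (V u) = 0" using G_sc[OF l(1) u(1)] u'' u'(3) by simp
  ultimately show "f (V u) = 0" by simp
next
  assume "f (V u) = 0"
  then show "pt q (V u) \<in> H" using H V_U1[OF u(1)] V_zero u(2) by blast
qed


lemma Bt_add: "Bt q a b c d (t + (t'::'a)) = tadd (Bt q a b c d t) (Bt q a b c d t')"
  by (simp add: Bt_def tadd_def Tr_def frs; simp add: algebra_simps)
lemma Bt_sc: "l \<in> Fq q \<Longrightarrow> Bt q a b c d (l * (t::'a)) = tsc l (Bt q a b c d t)"
  unfolding Fq_iff by (simp add: Bt_def tsc_def Tr_def frs; simp add: algebra_simps)
lemma Ct_add: "Ct q a b c d (t + (t'::'a)) = tadd (Ct q a b c d t) (Ct q a b c d t')"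
  by (simp add: Ct_def tadd_def Tr_def frs; simp add: algebra_simps)
lemma Ct_sc: "l \<in> Fq q \<Longrightarrow> Ct q a b c d (l * (t::'a)) = tsc l (Ct q a b c d t)"
  unfolding Fq_iff by (simp add: Ct_def tsc_def Tr_def frs; simp add: algebra_simps)

lemma Fexp: "f (V (wc q (\<alpha> + \<beta> * t) (\<gamma> + \<delta> * t))) =
   f (V (wc q \<alpha> \<gamma>)) + f (V (Bt q \<alpha> \<beta> \<gamma> \<delta> t)) + f (V (Ct q \<alpha> \<beta> \<gamma> \<delta> (t^q * t^(q^2)))) + Nm q t * f (V (wc q \<beta> \<delta>))"
  unfolding key_identity
  by (simp add: G_add G_sc inT_add inT_sc inT_wc inT_Bt inT_Ct Nm_Fq)

lemma Fexp_Fq: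
  assumes s: "s \<in> Fq q"
  shows "f (V (wc q (\<alpha> + \<beta> * s) (\<gamma> + \<delta> * s))) =
   f (V (wc q \<alpha> \<gamma>)) + s * f (V (Bt q \<alpha> \<beta> \<gamma> \<delta> 1)) + (s * s) * f (V (Ct q \<alpha> \<beta> \<gamma> \<delta> 1)) + (s * s * s) * f (V (wc q \<beta> \<delta>))"
proof -
  have s1: "s ^ q = s" using s Fq_iff by simp
  have "Bt q \<alpha> \<beta> \<gamma> \<delta> s = tsc s (Bt q \<alpha> \<beta> \<gamma> \<delta> 1)" using Bt_sc[OF s, of \<alpha> \<beta> \<gamma> \<delta> 1] by simp
  moreover have "Ct q \<alpha> \<beta> \<gamma> \<delta> (s^q * s^(q^2)) = tsc (s * s) (Ct q \<alpha> \<beta> \<gamma> \<delta> 1)"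
    using Ct_sc[OF Fq_mult[OF s s], of \<alpha> \<beta> \<gamma> \<delta> 1] by (simp add: fsq s1)
  moreover have "Nm q s = s * s * s" by (simp add: Nm_def fsq s1)
  ultimately show ?thesis unfolding Fexp
    by (simp add: G_sc s Fq_mult inT_Bt inT_Ct)
qed

lemma wc_nz: "(x, y) \<noteq> (0, 0) \<Longrightarrow> wc q x (y::'a) \<noteq> (0,0,0,0)"
  by (auto simp: wc_def Nm_nz)

lemma M_nz: "\<alpha> * \<delta> - \<beta> * \<gamma> \<noteq> 0 \<Longrightarrow> (\<alpha> + \<beta> * t, \<gamma> + \<delta> * (t::'a)) \<noteq> (0, 0)"
proof
  assume "\<alpha> * \<delta> - \<beta> * \<gamma> \<noteq> 0" "(\<alpha> + \<beta> * t, \<gamma> + \<delta> * t) = (0, 0)"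
  then have "\<alpha> = - \<beta> * t" "\<gamma> = - \<delta> * t" "\<alpha> * \<delta> - \<beta> * \<gamma> \<noteq> 0" by (auto simp: eq_neg_iff_add_eq_0)
  then show False by (simp add: algebra_simps)
qed

lemma M_nz2: "\<alpha> * \<delta> - \<beta> * \<gamma> \<noteq> 0 \<Longrightarrow> (\<beta>, \<delta>::'a) \<noteq> (0, 0)"
  by auto

lemma partA:
  assumes det: "\<alpha> * \<delta> - \<beta> * \<gamma> \<noteq> (0::'a)"
    and H: "H = {pt q u | u. u \<in> U1 q \<and> u \<noteq> zero8 \<and> f u = 0}"
    and nz: "\<not> (f (V (wc q \<alpha> \<gamma>)) = 0 \<and> f (V (Bt q \<alpha> \<beta> \<gamma> \<delta> 1)) = 0 \<and> f (V (Ct q \<alpha> \<beta> \<gamma> \<delta> 1)) = 0 \<and> f (V (wc q \<beta> \<delta>)) = 0)"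
  shows "card (theta q ` subline q (\<alpha>, \<beta>, \<gamma>, \<delta>) \<inter> H) \<le> 3"
proof -
  define c0 where "c0 = f (V (wc q \<alpha> \<gamma>))"
  define c1 where "c1 = f (V (Bt q \<alpha> \<beta> \<gamma> \<delta> 1))"
  define c2 where "c2 = f (V (Ct q \<alpha> \<beta> \<gamma> \<delta> 1))"
  define c3 where "c3 = f (V (wc q \<beta> \<delta>))"
  define p where "p = [:c0, c1, c2, c3:]"
  define R where "R = {s. poly p s = 0}"
  define E where "E = (if c3 = 0 then {theta q (\<beta>, \<delta>)} else {})"
  have sub: "theta q ` subline q (\<alpha>, \<beta>, \<gamma>, \<delta>) \<inter> H \<subseteq> (\<lambda>s. theta q (\<alpha> + \<beta> * s, \<gamma> + \<delta> * s)) ` R \<union> E"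
  proof
    fix z assume z: "z \<in> theta q ` subline q (\<alpha>, \<beta>, \<gamma>, \<delta>) \<inter> H"
    then obtain w where w: "w \<in> {(1, t) | t. t \<in> Fq q} \<union> {(0, 1)}" "z = theta q (matapp (\<alpha>, \<beta>, \<gamma>, \<delta>) w)"
      unfolding subline_def by blast
    show "z \<in> (\<lambda>s. theta q (\<alpha> + \<beta> * s, \<gamma> + \<delta> * s)) ` R \<union> E"
    proof (cases "w = (0, 1)")
      case True
      then have zz: "z = pt q (V (wc q \<beta> \<delta>))" using w theta_rep[OF M_nz2[OF det]] by (simp add: matapp_def)
      then have "c3 = 0" using z H_mem[OF H inT_wc wc_nz[OF M_nz2[OF det]]] c3_def by simp
      then show ?thesis using zz theta_rep[OF M_nz2[OF det]] by (simp add: E_def)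
    next
      case False
      then obtain s where s: "s \<in> Fq q" "w = (1, s)" using w by blast
      then have zz: "z = pt q (V (wc q (\<alpha> + \<beta> * s) (\<gamma> + \<delta> * s)))" "z = theta q (\<alpha> + \<beta> * s, \<gamma> + \<delta> * s)"
        using w theta_rep[OF M_nz[OF det]] by (simp_all add: matapp_def)
      then have "f (V (wc q (\<alpha> + \<beta> * s) (\<gamma> + \<delta> * s))) = 0"
        using z H_mem[OF H inT_wc wc_nz[OF M_nz[OF det]]] by simp
      then have "poly p s = 0" unfolding Fexp_Fq[OF s(1)] p_def c0_def c1_def c2_def c3_def
        by (simp add: algebra_simps)
      then show ?thesis using zz unfolding R_def by blast
    qed
  qed
  have "card (theta q ` subline q (\<alpha>, \<beta>, \<gamma>, \<delta>) \<inter> H) \<le> card ((\<lambda>s. theta q (\<alpha> + \<beta> * s, \<gamma> + \<delta> * s)) ` R \<union> E)"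
    by (rule card_mono[OF _ sub]) (simp add: E_def)
  also have "\<dots> \<le> card ((\<lambda>s. theta q (\<alpha> + \<beta> * s, \<gamma> + \<delta> * s)) ` R) + card E" by (rule card_Un_le)
  also have "\<dots> \<le> card R + card E"
    using card_image_le[of R "\<lambda>s. theta q (\<alpha> + \<beta> * s, \<gamma> + \<delta> * s)"] by (simp add: finite)
  also have "\<dots> \<le> 3"
  proof (cases "c3 = 0")
    case True
    then have "p = [:c0, c1, c2:]" by (simp add: p_def)
    moreover have "[:c0, c1, c2:] \<noteq> 0" using nz True unfolding c0_def c1_def c2_def c3_def by simp
    ultimately have "card R \<le> degree p" unfolding R_def using card_poly_roots_bound by metis
    also have "degree p \<le> 2" using \<open>p = [:c0, c1, c2:]\<close> by (simp add: degree_pCons_eq_if)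
    finally show ?thesis using True by (simp add: E_def)
  next
    case False
    then have "p \<noteq> 0" by (simp add: p_def)
    then have "card R \<le> degree p" unfolding R_def using card_poly_roots_bound by metis
    also have "degree p \<le> 3" by (simp add: p_def degree_pCons_eq_if)
    finally show ?thesis using False by (simp add: E_def)
  qed
  finally show ?thesis .
qed

lemma Bt_lin: "lin (\<lambda>t. f (V (Bt q \<alpha> \<beta> \<gamma> \<delta> t)))"
  unfolding lin_def using G_add G_sc G_Fq inT_Bt Bt_add Bt_sc by simp
lemma Ct_lin: "lin (\<lambda>t. f (V (Ct q \<alpha> \<beta> \<gamma> \<delta> t)))"
  unfolding lin_def using G_add G_sc G_Fq inT_Ct Ct_add Ct_sc by simp

lemma O1_cover:
  assumes det: "\<alpha> * \<delta> - \<beta> * \<gamma> \<noteq> (0::'a)" and z: "z \<in> O1 q"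
  shows "(\<exists>t. z = theta q (\<alpha> + \<beta> * t, \<gamma> + \<delta> * t)) \<or> z = theta q (\<beta>, \<delta>)"
proof -
  obtain x y :: 'a where xy: "(x, y) \<noteq> (0, 0)" "z = theta q (x, y)"
  proof -
    consider (a) t where "z = P q 1 t (t ^ (q^2 + q)) (t ^ (q^2 + q + 1))" | (b) "z = P q 0 0 0 1"
      using z unfolding O1_def by blast
    then show ?thesis
    proof cases
      case (a t)
      then have "z = theta q (1, t)" by (simp add: theta_def)
      then show ?thesis by (intro that[of 1 t]) simp_all
    next
      case b
      then have "z = theta q (0, 1)" by (simp add: theta_def)
      then show ?thesis by (intro that[of 0 1]) simp_all
    qed
  qed
  define D where "D = \<alpha> * \<delta> - \<beta> * \<gamma>"
  define u where "u = (\<delta> * x - \<beta> * y) / D"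
  define v where "v = (\<alpha> * y - \<gamma> * x) / D"
  have Dnz: "D \<noteq> 0" using det by (simp add: D_def)
  have "\<alpha> * u + \<beta> * v = (\<alpha> * (\<delta> * x - \<beta> * y) + \<beta> * (\<alpha> * y - \<gamma> * x)) / D"
    by (simp add: u_def v_def add_divide_distrib)
  also have "\<alpha> * (\<delta> * x - \<beta> * y) + \<beta> * (\<alpha> * y - \<gamma> * x) = D * x" by (simp add: D_def algebra_simps)
  finally have hx: "\<alpha> * u + \<beta> * v = x" using Dnz by simp
  have "\<gamma> * u + \<delta> * v = (\<gamma> * (\<delta> * x - \<beta> * y) + \<delta> * (\<alpha> * y - \<gamma> * x)) / D"
    by (simp add: u_def v_def add_divide_distrib)
  also have "\<gamma> * (\<delta> * x - \<beta> * y) + \<delta> * (\<alpha> * y - \<gamma> * x) = D * y" by (simp add: D_def algebra_simps)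
  finally have hy: "\<gamma> * u + \<delta> * v = y" using Dnz by simp
  show ?thesis
  proof (cases "u = 0")
    case False
    have "x = u * (\<alpha> + \<beta> * (v / u))" "y = u * (\<gamma> + \<delta> * (v / u))" using hx hy False by (simp_all add: field_simps)
    then have "z = theta q (\<alpha> + \<beta> * (v / u), \<gamma> + \<delta> * (v / u))" using xy(2) theta_scale[OF False] by simp
    then show ?thesis by blast
  next
    case True
    then have "x = v * \<beta>" "y = v * \<delta>" using hx hy by (simp_all add: mult.commute)
    moreover then have "v \<noteq> 0" using xy(1) by auto
    ultimately have "z = theta q (\<beta>, \<delta>)" using xy(2) theta_scale by simp
    then show ?thesis by blast
  qed
qed

lemma partB:
  assumes det: "\<alpha> * \<delta> - \<beta> * \<gamma> \<noteq> (0::'a)"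
    and H: "H = {pt q u | u. u \<in> U1 q \<and> u \<noteq> zero8 \<and> f u = 0}"
    and cardF: "CARD('a) = q ^ 3"
    and c0: "f (V (wc q \<alpha> \<gamma>)) = 0" and c1: "f (V (Bt q \<alpha> \<beta> \<gamma> \<delta> 1)) = 0"
    and c2: "f (V (Ct q \<alpha> \<beta> \<gamma> \<delta> 1)) = 0" and c3: "f (V (wc q \<beta> \<delta>)) = 0"
  shows "q^2 - q + 2 \<le> card (H \<inter> O1 q)"
proof -
  define S where "S = {t. f (V (Bt q \<alpha> \<beta> \<gamma> \<delta> t)) + f (V (Ct q \<alpha> \<beta> \<gamma> \<delta> (t^q * t^(q^2)))) = 0}"
  have cS: "q^2 - q + 1 \<le> card S" unfolding S_def
    by (rule count_S[OF cardF Bt_lin Ct_lin c1 c2])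
  define g where "g t = theta q (\<alpha> + \<beta> * t, \<gamma> + \<delta> * t)" for t
  have mem: "g t \<in> H \<longleftrightarrow> t \<in> S" for t
  proof -
    have "g t = pt q (V (wc q (\<alpha> + \<beta> * t) (\<gamma> + \<delta> * t)))" unfolding g_def by (rule theta_rep[OF M_nz[OF det]])
    then have "g t \<in> H \<longleftrightarrow> f (V (wc q (\<alpha> + \<beta> * t) (\<gamma> + \<delta> * t))) = 0"
      using H_mem[OF H inT_wc wc_nz[OF M_nz[OF det]]] by simp
    then show ?thesis unfolding Fexp S_def using c0 c3 by simp
  qed
  have inf: "theta q (\<beta>, \<delta>) \<in> H"
    using theta_rep[OF M_nz2[OF det]] H_mem[OF H inT_wc wc_nz[OF M_nz2[OF det]]] c3 by simp
  have eq: "H \<inter> O1 q = insert (theta q (\<beta>, \<delta>)) (g ` S)"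
  proof
    show "H \<inter> O1 q \<subseteq> insert (theta q (\<beta>, \<delta>)) (g ` S)"
    proof
      fix z assume z: "z \<in> H \<inter> O1 q"
      then consider (a) t where "z = g t" | (b) "z = theta q (\<beta>, \<delta>)"
        using O1_cover[OF det] unfolding g_def by blast
      then show "z \<in> insert (theta q (\<beta>, \<delta>)) (g ` S)"
      proof cases
        case (a t)
        then have "t \<in> S" using z mem by simp
        then show ?thesis using a by blast
      qed simp
    qed
    show "insert (theta q (\<beta>, \<delta>)) (g ` S) \<subseteq> H \<inter> O1 q"
      using inf mem theta_O1 unfolding g_def by blast
  qed
  have inj: "inj_on g S"
  proof
    fix t t' assume "t \<in> S" "t' \<in> S" "g t = g t'"
    then have "(\<alpha> + \<beta> * t) * (\<gamma> + \<delta> * t') = (\<alpha> + \<beta> * t') * (\<gamma> + \<delta> * t)"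
      using theta_cross[OF M_nz[OF det] M_nz[OF det]] unfolding g_def by blast
    then have "(\<alpha> * \<delta> - \<beta> * \<gamma>) * (t' - t) = 0" by (simp add: algebra_simps)
    then show "t = t'" using det by simp
  qed
  have notin: "theta q (\<beta>, \<delta>) \<notin> g ` S"
  proof
    assume "theta q (\<beta>, \<delta>) \<in> g ` S"
    then obtain t where "g t = theta q (\<beta>, \<delta>)" by blast
    then have "(\<alpha> + \<beta> * t) * \<delta> = \<beta> * (\<gamma> + \<delta> * t)"
      using theta_cross[OF M_nz[OF det] M_nz2[OF det]] unfolding g_def by blast
    then have "\<alpha> * \<delta> - \<beta> * \<gamma> = 0" by (simp add: algebra_simps)
    then show False using det by simp
  qed
  have "card (H \<inter> O1 q) = card S + 1" unfolding eq using notin card_image[OF inj] by (simp add: finite)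
  then show ?thesis using cS by simp
qed
end

end


theorem mainTheorem7:
  fixes q :: nat and H :: "('a::{finite,field}) list set set"
  assumes "\<exists>p k. prime p \<and> k > 0 \<and> q = p ^ k"
    and "CARD('a) = q ^ 3"
    and "q \<ge> 4"
    and "hyperplane q H"
    and "card (H \<inter> O1 q) = q^2 - q + 1"
  shows "\<forall>C. twisted_cubic q C \<longrightarrow> card (C \<inter> H) \<le> 3"
proof (intro allI impI)
  fix C :: "'a list set set" assume "twisted_cubic q C"
  then obtain a b c d :: 'a where det: "a * d - b * c \<noteq> 0" and C: "C = theta q ` subline q (a, b, c, d)"
    unfolding twisted_cubic_def by blast
  obtain f :: "'a list \<Rightarrow> 'a" where
    hadd: "\<forall>u\<in>U1 q. \<forall>v\<in>U1 q. f (map2 (+) u v) = f u + f v" and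
    hsc: "\<forall>l\<in>Fq q. \<forall>u\<in>U1 q. f (map (\<lambda>x. l * x) u) = l * f u" and
    hFq: "\<forall>u\<in>U1 q. f u \<in> Fq q" and
    H: "H = {pt q u | u. u \<in> U1 q \<and> u \<noteq> zero8 \<and> f u = 0}"
    using assms(4) unfolding hyperplane_def by blast
  note fs = frob_setup[OF assms(1) assms(2)]
  show "card (C \<inter> H) \<le> 3"
  proof (cases "f (V q (wc q a c)) = 0 \<and> f (V q (Bt q a b c d 1)) = 0 \<and> f (V q (Ct q a b c d 1)) = 0 \<and> f (V q (wc q b d)) = 0")
    case True
    then have "q^2 - q + 2 \<le> card (H \<inter> O1 q)"
      using partB[OF fs hadd hsc hFq det H assms(2)] by blast
    then show ?thesis using assms(5) by simp
  next
    case False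
    then show ?thesis unfolding C using partA[OF fs hadd hsc hFq det H] by blast
  qed
qed

end
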